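(* Let $A,C\in\mathbb{C}^{n\times n}$ be Hermitian positive semidefinite, let $B\in\mathbb{C}^{n\times n}$ be invertible, and let $H=\begin{bmatrix} A & B\\ B^* & -C\end{bmatrix}$. Set \[ \alpha=\sup_{x\neq 0}\frac{x^*Ax}{x^*\sqrt{BB^*}x},\qquad \gamma=\sup_{x\neq 0}\frac{x^*Cx}{x^*\sqrt{B^*B}x}. \] Then $H$ is invertible and \[ \|H^{-1}\|\le \|B^{-1}\|\bigl(1+\max\{\alpha,\gamma\}+\alpha\gamma\bigr). \]
   Context: $\|\cdot\|$ is the spectral norm and $\sqrt{X}$ the positive semidefinite square root of a positive semidefinite matrix $X$. *)

theory Defs
  imports "HOL-Analysis.Analysis"
begin

definition cadj :: "complex^'n^'m \<Rightarrow> complex^'m^'n" where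
  "cadj M = (\<chi> i j. cnj (M $ j $ i))"

definition qform :: "complex^'n^'n \<Rightarrow> complex^'n \<Rightarrow> complex" where
  "qform M x = (\<Sum>i\<in>UNIV. cnj (x $ i) * (M *v x) $ i)"

definition hermitian :: "complex^'n^'n \<Rightarrow> bool" where
  "hermitian M \<longleftrightarrow> cadj M = M"

text \<open>Hermitian positive semidefinite: x^* M x \<ge> 0 for all x (it is real since M is Hermitian).\<close>
definition psd :: "complex^'n^'n \<Rightarrow> bool" where
  "psd M \<longleftrightarrow> hermitian M \<and> (\<forall>x. 0 \<le> Re (qform M x))"

definition psd_sqrt :: "complex^'n^'n \<Rightarrow> complex^'n^'n" where
  "psd_sqrt M = (THE X. psd X \<and> X ** X = M)"

definition spec_norm :: "complex^'n^'m \<Rightarrow> real" where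
  "spec_norm M = onorm (\<lambda>x. M *v x)"

definition block_H :: "complex^'n^'n \<Rightarrow> complex^'n^'n \<Rightarrow> complex^'n^'n \<Rightarrow> complex^('n+'n)^('n+'n)" where
  "block_H A B C = (\<chi> i j. case i of
       Inl a \<Rightarrow> (case j of Inl b \<Rightarrow> A $ a $ b | Inr b \<Rightarrow> B $ a $ b)
     | Inr a \<Rightarrow> (case j of Inl b \<Rightarrow> cadj B $ a $ b | Inr b \<Rightarrow> - (C $ a $ b)))"

end

theory Submission
  imports Defs
begin



definition cinner :: "complex^'n \<Rightarrow> complex^'n \<Rightarrow> complex" where
  "cinner u v = (\<Sum>i\<in>UNIV. cnj (u $ i) * v $ i)"

definition q :: "complex^'n^'n \<Rightarrow> complex^'n \<Rightarrow> real" where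
  "q M x = Re (qform M x)"

lemma qform_cinner: "qform M x = cinner x (M *v x)"
  by (simp add: qform_def cinner_def)

lemma cinner_add_right: "cinner u (v + w) = cinner u v + cinner u w"
  by (simp add: cinner_def distrib_left sum.distrib)
lemma cinner_add_left: "cinner (u + v) w = cinner u w + cinner v w"
  by (simp add: cinner_def distrib_right sum.distrib)
lemma cinner_diff_right: "cinner u (v - w) = cinner u v - cinner u w"
  by (simp add: cinner_def right_diff_distrib sum_subtractf)
lemma cinner_diff_left: "cinner (u - v) w = cinner u w - cinner v w"
  by (simp add: cinner_def left_diff_distrib sum_subtractf)
lemma cinner_minus_right: "cinner u (- v) = - cinner u v"
  by (simp add: cinner_def sum_negf)
lemma cinner_minus_left: "cinner (- u) v = - cinner u v"
  by (simp add: cinner_def sum_negf)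
lemma cinner_zero_right[simp]: "cinner u 0 = 0"
  by (simp add: cinner_def)
lemma cinner_zero_left[simp]: "cinner 0 u = 0"
  by (simp add: cinner_def)
lemma vsc: "((r::real) *\<^sub>R (v::complex^'n)) $ i = complex_of_real r * v $ i"
  unfolding vector_scaleR_component by (rule scaleR_conv_of_real)
lemma msc: "((r::real) *\<^sub>R (A::complex^'n^'m)) $ i $ j = complex_of_real r * A $ i $ j"
  unfolding vector_scaleR_component by (rule scaleR_conv_of_real)

lemma cinner_scaleR_right: "cinner u (r *\<^sub>R v) = of_real r * cinner u v"
  unfolding cinner_def vsc by (simp add: sum_distrib_left mult_ac)
lemma cinner_scaleR_left: "cinner (r *\<^sub>R u) v = of_real r * cinner u v"
  unfolding cinner_def vsc by (simp add: sum_distrib_left mult_ac)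
lemma cinner_smult_right: "cinner u (c *s v) = c * cinner u v"
  by (simp add: cinner_def sum_distrib_left mult_ac)
lemma cinner_smult_left: "cinner (c *s u) v = cnj c * cinner u v"
  by (simp add: cinner_def sum_distrib_left mult_ac)

lemma cnj_cinner: "cnj (cinner u v) = cinner v u"
  by (simp add: cinner_def mult.commute)

lemma cinner_adj: "cinner u (M *v v) = cinner (cadj M *v u) v"
proof -
  have "cinner u (M *v v) = (\<Sum>i\<in>UNIV. \<Sum>j\<in>UNIV. cnj (u $ i) * M $ i $ j * v $ j)"
    by (simp add: cinner_def matrix_vector_mult_def sum_distrib_left mult_ac)
  also have "\<dots> = (\<Sum>j\<in>UNIV. \<Sum>i\<in>UNIV. cnj (u $ i) * M $ i $ j * v $ j)"
    by (rule sum.swap)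
  also have "\<dots> = cinner (cadj M *v u) v"
    by (simp add: cinner_def matrix_vector_mult_def cadj_def sum_distrib_right sum_distrib_left mult_ac)
  finally show ?thesis .
qed

lemma cadj_cadj[simp]: "cadj (cadj M) = M"
  by (simp add: cadj_def vec_eq_iff)

lemma cinner_adj2: "cinner (M *v u) v = cinner u (cadj M *v v)"
  using cinner_adj[of u "cadj M" v] by simp

lemma cadj_mult: "cadj (A ** B) = cadj B ** cadj A"
  by (simp add: cadj_def matrix_matrix_mult_def vec_eq_iff mult.commute)

lemma cadj_mat1[simp]: "cadj (mat 1 :: complex^'n^'n) = mat 1"
  by (simp add: cadj_def mat_def vec_eq_iff)

lemma cadj_add: "cadj (A + B) = cadj A + cadj B"
  by (simp add: cadj_def vec_eq_iff)
lemma cadj_diff: "cadj (A - B) = cadj A - cadj B"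
  by (simp add: cadj_def vec_eq_iff)
lemma cadj_scaleR: "cadj (r *\<^sub>R A) = r *\<^sub>R cadj A"
  by (simp add: cadj_def vec_eq_iff msc)
lemma cadj_zero[simp]: "cadj 0 = 0"
  by (simp add: cadj_def vec_eq_iff)

lemma herm_cinner: "hermitian M \<Longrightarrow> cinner u (M *v v) = cinner (M *v u) v"
  by (simp add: hermitian_def cinner_adj)

lemma cinner_self: "cinner x x = of_real ((norm x)\<^sup>2)"
proof -
  have "(norm x)\<^sup>2 = (\<Sum>i\<in>UNIV. (norm (x $ i))\<^sup>2)"
    by (simp add: norm_vec_def L2_set_def sum_nonneg)
  moreover have "cinner x x = (\<Sum>i\<in>UNIV. complex_of_real ((norm (x $ i))\<^sup>2))"
    unfolding cinner_def by (intro sum.cong refl) (simp add: complex_norm_square mult.commute del: of_real_power)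
  ultimately show ?thesis by simp
qed

lemma Re_cinner_self: "Re (cinner x x) = (norm x)\<^sup>2"
  by (simp add: cinner_self)

lemma matrix_vector_scaleR_left: "((r::real) *\<^sub>R (A::complex^'n^'m)) *v x = r *\<^sub>R (A *v x)"
  by (simp add: matrix_vector_mult_def vec_eq_iff scaleR_sum_right)
lemma matrix_vector_scaleR_right: "(A::complex^'n^'m) *v ((r::real) *\<^sub>R x) = r *\<^sub>R (A *v x)"
  by (simp add: matrix_vector_mult_def vec_eq_iff scaleR_sum_right)
lemma matrix_vector_minus_right: "(A::complex^'n^'m) *v (- x) = - (A *v x)"
  by (simp add: matrix_vector_mult_def vec_eq_iff sum_negf)

lemma q_real: "hermitian M \<Longrightarrow> qform M x = of_real (q M x)"
proof -
  assume h: "hermitian M"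
  have "cnj (qform M x) = qform M x"
    by (simp add: qform_cinner cnj_cinner herm_cinner[OF h])
  then show ?thesis by (simp add: q_def complex_eq_iff)
qed

lemma q_add_matrix: "q (A + B) x = q A x + q B x"
  by (simp add: q_def qform_cinner matrix_vector_mult_add_rdistrib cinner_add_right)
lemma q_diff_matrix: "q (A - B) x = q A x - q B x"
  by (simp add: q_def qform_cinner matrix_vector_mult_diff_rdistrib cinner_diff_right)
lemma q_scaleR_matrix: "q (r *\<^sub>R A) x = r * q A x"
  by (simp add: q_def qform_cinner matrix_vector_scaleR_left cinner_scaleR_right)
lemma q_zero_matrix[simp]: "q 0 x = 0"
  by (simp add: q_def qform_cinner)
lemma q_mat1: "q (mat 1) x = (norm x)\<^sup>2"
  by (simp add: q_def qform_cinner cinner_self)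
lemma q_minus_vec: "q M (- x) = q M x"
  by (simp add: q_def qform_cinner matrix_vector_minus_right cinner_minus_left cinner_minus_right)

lemma psd_herm: "psd M \<Longrightarrow> hermitian M"
  by (simp add: psd_def)
lemma psd_q: "psd M \<Longrightarrow> 0 \<le> q M x"
  by (simp add: psd_def q_def)
lemma psdI: "hermitian M \<Longrightarrow> (\<And>x. 0 \<le> q M x) \<Longrightarrow> psd M"
  by (simp add: psd_def q_def)

lemma hermitian_add: "hermitian A \<Longrightarrow> hermitian B \<Longrightarrow> hermitian (A + B)"
  by (simp add: hermitian_def cadj_add)
lemma hermitian_scaleR: "hermitian A \<Longrightarrow> hermitian (r *\<^sub>R A)"
  by (simp add: hermitian_def cadj_scaleR)
lemma psd_add: "psd A \<Longrightarrow> psd B \<Longrightarrow> psd (A + B)"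
  by (intro psdI hermitian_add) (auto simp: psd_herm q_add_matrix psd_q add_nonneg_nonneg)
lemma psd_scaleR: "psd A \<Longrightarrow> 0 \<le> r \<Longrightarrow> psd (r *\<^sub>R A)"
  by (intro psdI hermitian_scaleR) (auto simp: psd_herm q_scaleR_matrix psd_q)
lemma psd_zero: "psd 0"
  by (intro psdI) (auto simp: hermitian_def)
lemma psd_mat1: "psd (mat 1)"
  by (intro psdI) (auto simp: hermitian_def q_mat1)




lemma matrix_vector_smult: "(A::complex^'n^'m) *v (c *s x) = c *s (A *v x)"
  by (simp add: matrix_vector_mult_def vec_eq_iff sum_distrib_left mult_ac)

lemma q_expand:
  assumes h: "hermitian P"
  shows "q P (u + s *s v) = q P u + 2 * Re (s * cinner u (P *v v)) + (cmod s)\<^sup>2 * q P v"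
proof -
  have e: "cinner v (P *v u) = cnj (cinner u (P *v v))"
    by (simp add: herm_cinner[OF h] cnj_cinner)
  have "qform P (u + s *s v) = qform P u + s * cinner u (P *v v) + cnj s * cinner v (P *v u)
        + (cnj s * s) * qform P v"
    unfolding qform_cinner matrix_vector_right_distrib matrix_vector_smult cinner_add_left
        cinner_add_right cinner_smult_left cinner_smult_right by (simp add: ring_distribs add_ac mult_ac)
  also have "\<dots> = qform P u + s * cinner u (P *v v) + cnj (s * cinner u (P *v v))
        + of_real ((cmod s)\<^sup>2) * qform P v"
    by (simp add: e complex_norm_square mult.commute del: of_real_power)
  finally have "qform P (u + s *s v) = \<dots>" .
  then have "Re (qform P (u + s *s v)) = Re (qform P u) + 2 * Re (s * cinner u (P *v v)) + (cmod s)\<^sup>2 * Re (qform P v)"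
    by simp
  then show ?thesis by (simp add: q_def)
qed

lemma psd_cs:
  assumes p: "psd P"
  shows "(cmod (cinner u (P *v v)))\<^sup>2 \<le> q P u * q P v"
proof (cases "cinner u (P *v v) = 0")
  case True
  then show ?thesis using psd_q[OF p] by simp
next
  case False
  define b where "b = cinner u (P *v v)"
  define m where "m = cmod b"
  have m0: "m > 0" using False by (simp add: b_def m_def)
  define a where "a = q P u"
  define c where "c = q P v"
  have c0: "c \<ge> 0" using psd_q[OF p] by (simp add: c_def)
  have key: "0 \<le> a - 2 * t * m + t\<^sup>2 * c" for t :: real
  proof -
    define s where "s = - (complex_of_real t * cnj b / complex_of_real m)"
    have sb: "s * b = - complex_of_real (t * m)"
    proof -
      have "cnj b * b = complex_of_real (m * m)"
        by (metis complex_norm_square mult.commute of_real_mult power2_eq_square m_def)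
      then show ?thesis using m0
        by (simp add: s_def field_simps)
    qed
    have cs: "cmod s = \<bar>t\<bar>"
      using m0 by (simp add: s_def norm_mult norm_divide m_def)
    have "0 \<le> q P (u + s *s v)" by (rule psd_q[OF p])
    also have "\<dots> = a - 2 * t * m + t\<^sup>2 * c"
      by (simp add: q_expand[OF psd_herm[OF p]] a_def c_def b_def[symmetric] sb cs)
    finally show ?thesis .
  qed
  have "c > 0"
  proof (rule ccontr)
    assume "\<not> c > 0"
    then have "c = 0" using c0 by simp
    with key[of "(a + 1) / (2 * m)"] m0 show False by (simp add: field_simps)
  qed
  with key[of "m / c"] have "0 \<le> a - m\<^sup>2 / c"
    by (simp add: field_simps power2_eq_square)
  with \<open>c > 0\<close> have "m\<^sup>2 \<le> a * c" by (simp add: field_simps)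
  then show ?thesis by (simp add: m_def b_def a_def c_def)
qed

lemma cinner_cs: "cmod (cinner u v) \<le> norm u * norm v"
proof -
  have "(cmod (cinner u v))\<^sup>2 \<le> (norm u)\<^sup>2 * (norm v)\<^sup>2"
    using psd_cs[OF psd_mat1, of u v] by (simp add: q_mat1)
  then have "(cmod (cinner u v))\<^sup>2 \<le> (norm u * norm v)\<^sup>2" by (simp add: power_mult_distrib)
  then show ?thesis by (rule power2_le_imp_le) simp
qed

lemma Re_cinner_le: "Re (cinner u v) \<le> norm u * norm v"
  using cinner_cs[of u v] complex_Re_le_cmod order_trans by blast

lemma psd_cs_Re:
  assumes p: "psd P"
  shows "Re (cinner u (P *v v)) \<le> sqrt (q P u) * sqrt (q P v)"
proof -
  have "Re (cinner u (P *v v)) \<le> cmod (cinner u (P *v v))" by (rule complex_Re_le_cmod)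
  also have "\<dots> = sqrt ((cmod (cinner u (P *v v)))\<^sup>2)" by simp
  also have "\<dots> \<le> sqrt (q P u * q P v)" by (rule real_sqrt_le_mono[OF psd_cs[OF p]])
  also have "\<dots> = sqrt (q P u) * sqrt (q P v)" by (simp add: real_sqrt_mult)
  finally show ?thesis .
qed

lemma q_add_vec:
  assumes h: "hermitian P"
  shows "q P (u + v) = q P u + 2 * Re (cinner u (P *v v)) + q P v"
  using q_expand[OF h, of u 1 v] by simp

lemma psd_triangle:
  assumes p: "psd P"
  shows "sqrt (q P (u + v)) \<le> sqrt (q P u) + sqrt (q P v)"
proof -
  have qu: "0 \<le> q P u" and qv: "0 \<le> q P v" using psd_q[OF p] by auto
  have "q P (u + v) \<le> q P u + 2 * (sqrt (q P u) * sqrt (q P v)) + q P v"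
    using q_add_vec[OF psd_herm[OF p], of u v] psd_cs_Re[OF p, of u v] by linarith
  also have "\<dots> = (sqrt (q P u) + sqrt (q P v))\<^sup>2"
    using qu qv by (simp add: power2_eq_square algebra_simps)
  finally show ?thesis
    by (intro real_le_lsqrt) (use qu qv in auto)
qed

lemma psd_q_zero:
  assumes p: "psd P" and z: "q P v = 0"
  shows "P *v v = 0"
proof -
  have "(cmod (cinner (P *v v) (P *v v)))\<^sup>2 \<le> q P (P *v v) * q P v" by (rule psd_cs[OF p])
  then have "(cmod (cinner (P *v v) (P *v v)))\<^sup>2 \<le> 0" using z by simp
  then have "cinner (P *v v) (P *v v) = 0" by simp
  then show ?thesis by (simp add: cinner_self)
qed




type_synonym 'n cm = "complex^'n^'n"

lemma mm_add_r: "((A::complex^'n^'m) + B) ** C = A ** C + B ** C"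
  by (simp add: matrix_matrix_mult_def vec_eq_iff distrib_right sum.distrib)
lemma mm_diff_r: "((A::complex^'n^'m) - B) ** C = A ** C - B ** C"
  by (simp add: matrix_matrix_mult_def vec_eq_iff left_diff_distrib sum_subtractf)
lemma mm_diff_l: "(A::complex^'n^'m) ** (B - C) = A ** B - A ** C"
  by (simp add: matrix_matrix_mult_def vec_eq_iff right_diff_distrib sum_subtractf)
lemma mm_scale_l: "((r::real) *\<^sub>R (A::complex^'n^'m)) ** B = r *\<^sub>R (A ** B)"
  by (simp add: scalar_matrix_assoc)
lemma mm_scale_r: "(A::complex^'n^'m) ** ((r::real) *\<^sub>R B) = r *\<^sub>R (A ** B)"
  by (simp add: matrix_scalar_ac scalar_matrix_assoc)
lemma mm_zero_l: "(0::complex^'n^'m) ** B = 0" by simp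
lemma mm_zero_r: "(A::complex^'n^'m) ** 0 = 0" by simp

primrec mpow :: "complex^'n^'n \<Rightarrow> nat \<Rightarrow> complex^'n^'n" where
  "mpow Y 0 = mat 1"
| "mpow Y (Suc n) = Y ** mpow Y n"

lemma mpow_add: "mpow Y (a + b) = mpow Y a ** mpow Y b"
  by (induct a) (simp_all add: matrix_mul_assoc)

lemma comm_mpow: "Q ** Y = Y ** Q \<Longrightarrow> Q ** mpow Y n = mpow Y n ** Q"
proof (induct n)
  case 0 then show ?case by simp
next
  case (Suc n)
  have "Q ** mpow Y (Suc n) = (Q ** Y) ** mpow Y n" by (simp add: matrix_mul_assoc)
  also have "\<dots> = (Y ** Q) ** mpow Y n" using Suc.prems by simp
  also have "\<dots> = Y ** (Q ** mpow Y n)" by (simp add: matrix_mul_assoc)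
  also have "\<dots> = Y ** (mpow Y n ** Q)" using Suc by simp
  also have "\<dots> = mpow Y (Suc n) ** Q" by (simp add: matrix_mul_assoc)
  finally show ?case .
qed

lemma hermitian_mpow: "hermitian Y \<Longrightarrow> hermitian (mpow Y n)"
proof (induct n)
  case 0 then show ?case by (simp add: hermitian_def)
next
  case (Suc n)
  have "cadj (mpow Y (Suc n)) = mpow Y n ** Y"
    using Suc by (simp add: cadj_mult hermitian_def)
  also have "\<dots> = mpow Y (Suc n)" using comm_mpow[of Y Y n] by simp
  finally show ?case by (simp add: hermitian_def)
qed

lemma q_congr: "hermitian Y \<Longrightarrow> q (Y ** P ** Y) x = q P (Y *v x)"
  by (simp add: q_def qform_cinner matrix_vector_mul_assoc[symmetric] herm_cinner)

lemma hermitian_congr: "hermitian Y \<Longrightarrow> hermitian P \<Longrightarrow> hermitian (Y ** P ** Y)"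
  by (simp add: hermitian_def cadj_mult matrix_mul_assoc)

lemma psd_congr: "hermitian Y \<Longrightarrow> psd P \<Longrightarrow> psd (Y ** P ** Y)"
  by (intro psdI hermitian_congr) (auto simp: psd_herm q_congr psd_q)

lemma psd_mpow: assumes "psd Y" shows "psd (mpow Y n)"
proof -
  have h: "hermitian Y" using assms by (rule psd_herm)
  have "psd (mpow Y n) \<and> psd (mpow Y (Suc n))"
  proof (induct n)
    case 0 then show ?case using assms by (simp add: psd_mat1)
  next
    case (Suc n)
    have "mpow Y (Suc (Suc n)) = Y ** mpow Y n ** Y"
      using comm_mpow[of Y Y n] by (simp add: matrix_mul_assoc)
    then have "psd (mpow Y (Suc (Suc n)))" using psd_congr[OF h] Suc by simp
    then show ?case using Suc by simp
  qed
  then show ?thesis by simp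
qed

definition mcone :: "complex^'n^'n \<Rightarrow> complex^'n^'n \<Rightarrow> bool" where
  "mcone Y Z \<longleftrightarrow> (\<exists>L. (\<forall>p\<in>set L. 0 \<le> fst p) \<and> Z = sum_list (map (\<lambda>p. fst p *\<^sub>R mpow Y (snd p)) L))"

lemma cone_psd: assumes "psd Y" "mcone Y Z" shows "psd Z"
proof -
  obtain L where L: "\<forall>p\<in>set L. 0 \<le> fst p" "Z = sum_list (map (\<lambda>p. fst p *\<^sub>R mpow Y (snd p)) L)"
    using assms(2) by (auto simp: mcone_def)
  have "psd (sum_list (map (\<lambda>p. fst p *\<^sub>R mpow Y (snd p)) L))"
    using L(1) by (induct L) (auto intro!: psd_add psd_scaleR psd_mpow assms(1) psd_zero)
  then show ?thesis using L(2) by simp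
qed

lemma cone_zero: "mcone Y 0"
  unfolding mcone_def by (rule exI[of _ "[]"]) simp

lemma cone_Y: "mcone Y Y"
  unfolding mcone_def by (rule exI[of _ "[(1,1)]"]) simp

lemma cone_add: "mcone Y A \<Longrightarrow> mcone Y B \<Longrightarrow> mcone Y (A + B)"
  unfolding mcone_def
  by (metis (no_types, lifting) Un_iff map_append set_append sum_list_append)

lemma sum_list_scaleR_matrix:
  "r *\<^sub>R sum_list (map f L) = sum_list (map (\<lambda>p. r *\<^sub>R f p) L)" for f :: "_ \<Rightarrow> complex^'n^'n"
  by (induct L) (simp_all add: scaleR_add_right)

lemma cone_scale: assumes "mcone Y A" "0 \<le> r" shows "mcone Y (r *\<^sub>R A)"
proof -
  obtain L where L: "\<forall>p\<in>set L. 0 \<le> fst p" "A = sum_list (map (\<lambda>p. fst p *\<^sub>R mpow Y (snd p)) L)"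
    using assms(1) by (auto simp: mcone_def)
  let ?L = "map (\<lambda>p. (r * fst p, snd p)) L"
  have "r *\<^sub>R A = sum_list (map (\<lambda>p. fst p *\<^sub>R mpow Y (snd p)) ?L)"
    by (simp add: L(2) sum_list_scaleR_matrix o_def)
  moreover have "\<forall>p\<in>set ?L. 0 \<le> fst p" using L(1) assms(2) by auto
  ultimately show ?thesis unfolding mcone_def by blast
qed

lemma sum_list_mm_r: "sum_list (map f L) ** B = sum_list (map (\<lambda>p. f p ** B) L)"
  for f :: "_ \<Rightarrow> complex^'n^'n"
  by (induct L) (simp_all add: mm_add_r)
lemma sum_list_mm_l: "B ** sum_list (map f L) = sum_list (map (\<lambda>p. B ** f p) L)"
  for f :: "_ \<Rightarrow> complex^'n^'n"
  by (induct L) (simp_all add: matrix_add_ldistrib)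

lemma sum_list_concat_map: "sum_list (map f (concat xss)) = sum_list (map (\<lambda>xs. sum_list (map f xs)) xss)"
  for f :: "_ \<Rightarrow> 'a::monoid_add"
  by (induct xss) simp_all

lemma cone_mult: assumes "mcone Y A" "mcone Y B" shows "mcone Y (A ** B)"
proof -
  obtain L1 where L1: "\<forall>p\<in>set L1. 0 \<le> fst p" "A = sum_list (map (\<lambda>p. fst p *\<^sub>R mpow Y (snd p)) L1)"
    using assms(1) by (auto simp: mcone_def)
  obtain L2 where L2: "\<forall>p\<in>set L2. 0 \<le> fst p" "B = sum_list (map (\<lambda>p. fst p *\<^sub>R mpow Y (snd p)) L2)"
    using assms(2) by (auto simp: mcone_def)
  let ?f = "\<lambda>p::real\<times>nat. fst p *\<^sub>R mpow Y (snd p)"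
  have "A ** B = sum_list (map (\<lambda>a. ?f a ** B) L1)"
    by (simp only: L1(2) sum_list_mm_r)
  also have "\<dots> = sum_list (map (\<lambda>a. sum_list (map (\<lambda>b. ?f a ** ?f b) L2)) L1)"
    by (simp only: L2(2) sum_list_mm_l)
  also have "\<dots> = sum_list (map (\<lambda>a. sum_list (map (\<lambda>b. ?f (fst a * fst b, snd a + snd b)) L2)) L1)"
    by (simp add: mm_scale_l mm_scale_r mpow_add mult.commute)
  also have "\<dots> = sum_list (map ?f (concat (map (\<lambda>a. map (\<lambda>b. (fst a * fst b, snd a + snd b)) L2) L1)))"
    by (simp add: sum_list_concat_map o_def)
  finally have e: "A ** B = \<dots>" .
  have "\<forall>p\<in>set (concat (map (\<lambda>a. map (\<lambda>b. (fst a * fst b, snd a + snd b)) L2) L1)). 0 \<le> fst p"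
    using L1(1) L2(1) by auto
  with e show ?thesis unfolding mcone_def by blast
qed

lemma cone_comm: assumes "Q ** Y = Y ** Q" "mcone Y Z" shows "Q ** Z = Z ** Q"
proof -
  obtain L where L: "Z = sum_list (map (\<lambda>p. fst p *\<^sub>R mpow Y (snd p)) L)"
    using assms(2) by (auto simp: mcone_def)
  have "Q ** sum_list (map (\<lambda>p. fst p *\<^sub>R mpow Y (snd p)) L) = sum_list (map (\<lambda>p. fst p *\<^sub>R mpow Y (snd p)) L) ** Q"
    by (induct L) (simp_all add: matrix_add_ldistrib mm_add_r mm_scale_l mm_scale_r comm_mpow[OF assms(1)])
  then show ?thesis using L by simp
qed

lemma cone_comm2: assumes "mcone Y A" "mcone Y B" shows "A ** B = B ** A"
proof -
  have "Y ** A = A ** Y" using cone_comm[of Y Y A] assms(1) by simp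
  then show ?thesis using cone_comm[of A Y B] assms(2) by simp
qed




lemma psd_sq_bound:
  assumes p: "psd P" and b: "\<And>u. norm (P *v u) \<le> l * norm u"
  shows "(norm (P *v v))\<^sup>2 \<le> l * q P v"
proof (cases "P *v v = 0")
  case True
  show ?thesis
  proof (cases "v = 0")
    case True then show ?thesis by (simp add: q_def qform_cinner)
  next
    case False
    have "0 \<le> l * norm v" using b[of v] norm_ge_zero order_trans by blast
    then have "0 \<le> l" using False by (simp add: zero_le_mult_iff)
    then show ?thesis using \<open>P *v v = 0\<close> psd_q[OF p, of v] by simp
  qed
next
  case False
  define w where "w = P *v v"
  have wpos: "norm w > 0" using False by (simp add: w_def)
  have "0 \<le> l * norm w" using b[of w] norm_ge_zero order_trans by blast
  then have l0: "0 \<le> l" using wpos by (simp add: zero_le_mult_iff)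
  have qw: "q P w \<le> l * (norm w)\<^sup>2"
  proof -
    have "q P w \<le> norm w * norm (P *v w)" unfolding q_def qform_cinner by (rule Re_cinner_le)
    also have "\<dots> \<le> norm w * (l * norm w)" by (rule mult_left_mono[OF b norm_ge_zero])
    finally show ?thesis by (simp add: power2_eq_square mult_ac)
  qed
  have "sqrt (q P w) \<le> sqrt (l * (norm w)\<^sup>2)" using qw by (rule real_sqrt_le_mono)
  also have "\<dots> = sqrt l * norm w" by (simp add: real_sqrt_mult)
  finally have sw: "sqrt (q P w) \<le> sqrt l * norm w" .
  have "(norm w)\<^sup>2 = Re (cinner w w)" by (simp add: Re_cinner_self)
  also have "cinner w w = cinner v (P *v w)"
    by (simp add: w_def herm_cinner[OF psd_herm[OF p]])
  also have "Re (cinner v (P *v w)) \<le> sqrt (q P v) * sqrt (q P w)" by (rule psd_cs_Re[OF p])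
  also have "\<dots> \<le> sqrt (q P v) * (sqrt l * norm w)"
    by (rule mult_left_mono[OF sw]) (simp add: psd_q[OF p])
  finally have "norm w * norm w \<le> (sqrt (q P v) * sqrt l) * norm w" by (simp add: power2_eq_square mult_ac)
  then have "norm w \<le> sqrt (q P v) * sqrt l" using wpos by simp
  then have "(norm w)\<^sup>2 \<le> (sqrt (q P v) * sqrt l)\<^sup>2" by (rule power_mono) simp
  also have "\<dots> = q P v * l" using psd_q[OF p, of v] l0 by (simp add: power_mult_distrib)
  finally show ?thesis by (simp add: w_def mult.commute)
qed

lemma sqrt_unique_comm:
  assumes P: "psd P" and Q: "psd Q" and c: "P ** Q = Q ** P" and s: "P ** P = Q ** Q"
  shows "P = Q"
proof -
  define D where "D = P - Q"
  have hD: "hermitian D"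
    using psd_herm[OF P] psd_herm[OF Q] by (simp add: D_def hermitian_def cadj_diff)
  have z: "(P + Q) ** D = 0"
    by (simp add: D_def mm_diff_l mm_add_r c s)
  have "D *v x = 0" for x
  proof -
    have "q (P + Q) (D *v x) = q (D ** (P + Q) ** D) x" by (simp add: q_congr[OF hD])
    also have "D ** (P + Q) ** D = 0" by (simp add: matrix_mul_assoc[symmetric] z)
    finally have "q P (D *v x) + q Q (D *v x) = 0" by (simp add: q_add_matrix)
    moreover have "0 \<le> q P (D *v x)" "0 \<le> q Q (D *v x)" using psd_q P Q by auto
    ultimately have "q P (D *v x) = 0" "q Q (D *v x) = 0" by linarith+
    then have "P *v (D *v x) = 0" "Q *v (D *v x) = 0" using psd_q_zero P Q by auto
    then have dd: "D *v (D *v x) = 0" by (simp add: D_def matrix_vector_mult_diff_rdistrib)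
    have "(norm (D *v x))\<^sup>2 = Re (cinner (D *v x) (D *v x))" by (simp add: Re_cinner_self)
    also have "\<dots> = Re (cinner x (D *v (D *v x)))" by (simp add: herm_cinner[OF hD])
    finally show ?thesis using dd by simp
  qed
  then have "D = 0" by (simp add: matrix_eq)
  then show ?thesis by (simp add: D_def)
qed

lemma diff_sq: "(P::complex^'n^'n) ** Q = Q ** P \<Longrightarrow> P ** P - Q ** Q = (P - Q) ** (P + Q)"
  by (simp add: mm_diff_r matrix_add_ldistrib algebra_simps)

primrec Wseq :: "complex^'n^'n \<Rightarrow> nat \<Rightarrow> complex^'n^'n" where
  "Wseq Y 0 = 0"
| "Wseq Y (Suc k) = (1/2) *\<^sub>R (Y + Wseq Y k ** Wseq Y k)"

lemma cone_Wseq: "mcone Y (Wseq Y k)"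
  by (induct k) (auto intro!: cone_zero cone_scale cone_add cone_Y cone_mult)

lemma cone_Wdiff: "mcone Y (Wseq Y (Suc k) - Wseq Y k)"
proof (induct k)
  case 0 show ?case by (auto intro!: cone_scale cone_Y)
next
  case (Suc k)
  let ?P = "Wseq Y (Suc k)" and ?Q = "Wseq Y k"
  have c: "?P ** ?Q = ?Q ** ?P" by (rule cone_comm2[OF cone_Wseq cone_Wseq])
  have "Wseq Y (Suc (Suc k)) - Wseq Y (Suc k) = (1/2) *\<^sub>R (?P ** ?P - ?Q ** ?Q)"
    by (simp only: Wseq.simps(2)[of Y "Suc k"] Wseq.simps(2)[of Y k] scaleR_diff_right[symmetric]) simp
  also have "?P ** ?P - ?Q ** ?Q = (?P - ?Q) ** (?P + ?Q)"
    by (rule diff_sq[OF c])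
  finally have e: "Wseq Y (Suc (Suc k)) - Wseq Y (Suc k) = (1/2) *\<^sub>R ((?P - ?Q) ** (?P + ?Q))" .
  show ?case unfolding e by (intro cone_scale cone_mult cone_add cone_Wseq Suc) simp
qed

definition opb :: "complex^'n^'n \<Rightarrow> real \<Rightarrow> bool" where
  "opb M l \<longleftrightarrow> (\<forall>x. norm (M *v x) \<le> l * norm x)"

lemma opb_Wseq: assumes "opb Y 1" shows "opb (Wseq Y k) 1"
proof (induct k)
  case 0 show ?case by (simp add: opb_def)
next
  case (Suc k)
  show ?case unfolding opb_def
  proof
    fix x
    have "norm (Wseq Y (Suc k) *v x) = (1/2) * norm (Y *v x + Wseq Y k *v (Wseq Y k *v x))"
      by (simp add: matrix_vector_scaleR_left matrix_vector_mult_add_rdistrib matrix_vector_mul_assoc)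
    also have "\<dots> \<le> (1/2) * (norm (Y *v x) + norm (Wseq Y k *v (Wseq Y k *v x)))"
      by (simp add: norm_triangle_ineq)
    also have "\<dots> \<le> (1/2) * (norm x + norm x)"
    proof -
      have a: "norm (Y *v x) \<le> norm x" using assms by (simp add: opb_def)
      have b: "norm (Wseq Y k *v y) \<le> norm y" for y using Suc by (simp add: opb_def)
      have c: "norm (Wseq Y k *v (Wseq Y k *v x)) \<le> norm x"
        using b[of x] b[of "Wseq Y k *v x"] by linarith
      show ?thesis using a c by (intro mult_left_mono add_mono) auto
    qed
    finally show "norm (Wseq Y (Suc k) *v x) \<le> 1 * norm x" by simp
  qed
qed

lemma q_le_opb: "opb M 1 \<Longrightarrow> q M x \<le> (norm x)\<^sup>2"
proof -
  assume "opb M 1"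
  have "q M x \<le> norm x * norm (M *v x)" unfolding q_def qform_cinner by (rule Re_cinner_le)
  also have "\<dots> \<le> norm x * norm x" using \<open>opb M 1\<close> by (simp add: opb_def mult_left_mono)
  finally show ?thesis by (simp add: power2_eq_square)
qed

lemma qform_expand_gen:
  "qform M (u + s *s v) = qform M u + s * cinner u (M *v v) + cnj s * cinner v (M *v u) + (cnj s * s) * qform M v"
  unfolding qform_cinner matrix_vector_right_distrib matrix_vector_smult cinner_add_left
        cinner_add_right cinner_smult_left cinner_smult_right by (simp add: ring_distribs add_ac mult_ac)

lemma polar:
  "cinner u (M *v v) = (qform M (u + 1 *s v) - qform M (u + (-1) *s v)
      - \<i> * qform M (u + \<i> *s v) + \<i> * qform M (u + (-\<i>) *s v)) / 4"
  unfolding qform_expand_gen by (simp add: field_simps)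

lemma entry_cinner: "M $ i $ j = cinner (axis i 1) (M *v axis j 1)"
  by (simp add: cinner_def matrix_vector_mult_def axis_def if_distrib if_distribR sum.delta' cong: if_cong)

definition mlim :: "(nat \<Rightarrow> complex^'n^'n) \<Rightarrow> complex^'n^'n \<Rightarrow> bool" where
  "mlim F L \<longleftrightarrow> (\<forall>i j. (\<lambda>k. F k $ i $ j) \<longlonglongrightarrow> L $ i $ j)"

lemma mlim_unique: "mlim F A \<Longrightarrow> mlim F B \<Longrightarrow> A = B"
  unfolding mlim_def vec_eq_iff using LIMSEQ_unique by blast

lemma mlim_Suc: "mlim F A \<Longrightarrow> mlim (\<lambda>k. F (Suc k)) A"
  unfolding mlim_def by (auto intro: LIMSEQ_Suc)

lemma mlim_const: "mlim (\<lambda>k. A) A"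
  unfolding mlim_def by simp

lemma mlim_add: "mlim F A \<Longrightarrow> mlim G B \<Longrightarrow> mlim (\<lambda>k. F k + G k) (A + B)"
  unfolding mlim_def by (auto intro: tendsto_add)

lemma mlim_scaleR: "mlim F A \<Longrightarrow> mlim (\<lambda>k. r *\<^sub>R F k) (r *\<^sub>R A)"
  unfolding mlim_def msc by (auto intro: tendsto_mult tendsto_const)

lemma mlim_mult: "mlim F A \<Longrightarrow> mlim G B \<Longrightarrow> mlim (\<lambda>k. F k ** G k) (A ** B)"
  unfolding mlim_def by (simp add: matrix_matrix_mult_def) (auto intro!: tendsto_sum tendsto_mult)

lemma mlim_cadj: "mlim F A \<Longrightarrow> mlim (\<lambda>k. cadj (F k)) (cadj A)"
  unfolding mlim_def by (simp add: cadj_def) (auto intro!: tendsto_cnj)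

lemma mlim_qform: "mlim F A \<Longrightarrow> (\<lambda>k. qform (F k) x) \<longlonglongrightarrow> qform A x"
  unfolding mlim_def qform_def by (simp add: matrix_vector_mult_def) (auto intro!: tendsto_sum tendsto_mult tendsto_const)

lemma mlim_exists:
  assumes h: "\<And>k. hermitian (F k)" and c: "\<And>y. convergent (\<lambda>k. q (F k) y)"
  shows "\<exists>L. mlim F L"
proof -
  have cq: "convergent (\<lambda>k. qform (F k) y)" for y
  proof -
    obtain l where "(\<lambda>k. q (F k) y) \<longlonglongrightarrow> l" using c[of y] by (auto simp: convergent_def)
    then have "(\<lambda>k. complex_of_real (q (F k) y)) \<longlonglongrightarrow> of_real l" by (rule tendsto_of_real)
    then show ?thesis by (auto simp: convergent_def q_real[OF h])
  qed
  have ce: "convergent (\<lambda>k. F k $ i $ j)" for i j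
  proof -
    have e: "(\<lambda>k. F k $ i $ j) = (\<lambda>k. (qform (F k) (axis i 1 + 1 *s axis j 1) - qform (F k) (axis i 1 + (-1) *s axis j 1)
      - \<i> * qform (F k) (axis i 1 + \<i> *s axis j 1) + \<i> * qform (F k) (axis i 1 + (-\<i>) *s axis j 1)) / 4)"
      by (rule ext) (simp only: entry_cinner polar)
    have "(\<lambda>k. F k $ i $ j) \<longlonglongrightarrow> (lim (\<lambda>k. qform (F k) (axis i 1 + 1 *s axis j 1)) - lim (\<lambda>k. qform (F k) (axis i 1 + (-1) *s axis j 1))
      - \<i> * lim (\<lambda>k. qform (F k) (axis i 1 + \<i> *s axis j 1)) + \<i> * lim (\<lambda>k. qform (F k) (axis i 1 + (-\<i>) *s axis j 1))) / 4"
      unfolding e by (intro tendsto_intros cq[unfolded convergent_LIMSEQ_iff]) auto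
    then show ?thesis by (auto simp: convergent_def)
  qed
  define L where "L = (\<chi> i j. lim (\<lambda>k. F k $ i $ j))"
  have "mlim F L" unfolding mlim_def L_def using ce by (simp add: convergent_LIMSEQ_iff)
  then show ?thesis by blast
qed




lemma Wlim_props:
  assumes pY: "psd Y" and oY: "opb Y 1"
  shows "\<exists>Wl. mlim (Wseq Y) Wl \<and> Wl = (1/2) *\<^sub>R (Y + Wl ** Wl) \<and> hermitian Wl \<and>
     (\<forall>x. q Wl x \<le> (norm x)\<^sup>2) \<and> (\<forall>Q. Q ** Y = Y ** Q \<longrightarrow> Q ** Wl = Wl ** Q)"
proof -
  let ?W = "Wseq Y"
  have psdW: "psd (?W k)" for k by (rule cone_psd[OF pY cone_Wseq])
  have herm: "hermitian (?W k)" for k using psdW psd_herm by blast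
  have bnd: "q (?W k) x \<le> (norm x)\<^sup>2" for k x by (rule q_le_opb[OF opb_Wseq[OF oY]])
  have inc: "incseq (\<lambda>k. q (?W k) x)" for x
  proof (rule incseq_SucI)
    fix k
    have "0 \<le> q (?W (Suc k) - ?W k) x" by (rule psd_q[OF cone_psd[OF pY cone_Wdiff]])
    then show "q (?W k) x \<le> q (?W (Suc k)) x" by (simp add: q_diff_matrix)
  qed
  have conv: "convergent (\<lambda>k. q (?W k) x)" for x
  proof -
    obtain l where "(\<lambda>k. q (?W k) x) \<longlonglongrightarrow> l"
      using incseq_convergent[OF inc, where B="(norm x)\<^sup>2"] bnd by blast
    then show ?thesis by (auto simp: convergent_def)
  qed
  obtain Wl where ml: "mlim ?W Wl" using mlim_exists[OF herm conv] by blast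
  have fx: "Wl = (1/2) *\<^sub>R (Y + Wl ** Wl)"
  proof -
    have "mlim (\<lambda>k. ?W (Suc k)) Wl" by (rule mlim_Suc[OF ml])
    moreover have "mlim (\<lambda>k. ?W (Suc k)) ((1/2) *\<^sub>R (Y + Wl ** Wl))"
      unfolding Wseq.simps by (intro mlim_scaleR mlim_add mlim_const mlim_mult ml)
    ultimately show ?thesis by (rule mlim_unique)
  qed
  have hW: "hermitian Wl"
  proof -
    have "mlim (\<lambda>k. cadj (?W k)) (cadj Wl)" by (rule mlim_cadj[OF ml])
    moreover have "(\<lambda>k. cadj (?W k)) = ?W" using herm by (simp add: hermitian_def)
    ultimately have "mlim ?W (cadj Wl)" by simp
    then have "Wl = cadj Wl" by (rule mlim_unique[OF ml])
    then show ?thesis by (simp add: hermitian_def)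
  qed
  have qb: "q Wl x \<le> (norm x)\<^sup>2" for x
  proof -
    have "(\<lambda>k. q (?W k) x) \<longlonglongrightarrow> q Wl x" unfolding q_def by (intro tendsto_Re mlim_qform ml)
    then show ?thesis using bnd by (intro LIMSEQ_le_const2) auto
  qed
  have cm: "Q ** Wl = Wl ** Q" if "Q ** Y = Y ** Q" for Q
  proof -
    have "mlim (\<lambda>k. Q ** ?W k) (Q ** Wl)" by (intro mlim_mult mlim_const ml)
    moreover have "mlim (\<lambda>k. Q ** ?W k) (Wl ** Q)"
      using mlim_mult[OF ml mlim_const[of Q]] cone_comm[OF that cone_Wseq] by simp
    ultimately show ?thesis by (rule mlim_unique)
  qed
  show ?thesis using ml fx hW qb cm by blast
qed

lemma psd_sqrt_exists_unique:
  assumes pM: "psd M" shows "\<exists>!X. psd X \<and> X ** X = M"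
proof -
  define L where "L = onorm (\<lambda>x. M *v x)"
  have bM: "norm (M *v x) \<le> L * norm x" for x unfolding L_def by (rule onorm) simp
  have L0: "0 \<le> L" unfolding L_def by (rule onorm_pos_le) simp
  define c where "c = L + 1"
  have c0: "0 < c" using L0 by (simp add: c_def)
  define Y where "Y = mat 1 - (1/c) *\<^sub>R M"
  have hM: "hermitian M" using pM by (rule psd_herm)
  have hY: "hermitian Y" using hM by (simp add: Y_def hermitian_def cadj_diff cadj_scaleR)
  have qM: "q M x \<le> L * (norm x)\<^sup>2" for x
  proof -
    have "q M x \<le> norm x * norm (M *v x)" unfolding q_def qform_cinner by (rule Re_cinner_le)
    also have "\<dots> \<le> norm x * (L * norm x)" by (rule mult_left_mono[OF bM norm_ge_zero])
    finally show ?thesis by (simp add: power2_eq_square mult_ac)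
  qed
  have pY: "psd Y"
  proof (rule psdI[OF hY])
    fix x
    have "q Y x = (norm x)\<^sup>2 - q M x / c" by (simp add: Y_def q_diff_matrix q_scaleR_matrix q_mat1)
    moreover have "q M x / c \<le> (norm x)\<^sup>2"
    proof -
      have "q M x \<le> c * (norm x)\<^sup>2" unfolding c_def distrib_right
        using qM[of x] zero_le_power2[of "norm x"] by linarith
      then show ?thesis using c0 by (simp add: divide_le_eq mult.commute)
    qed
    ultimately show "0 \<le> q Y x" by simp
  qed
  have oY: "opb Y 1"
    unfolding opb_def
  proof
    fix x
    have sq: "(norm (M *v x))\<^sup>2 \<le> L * q M x" by (rule psd_sq_bound[OF pM bM])
    have q0: "0 \<le> q M x" by (rule psd_q[OF pM])
    have e1: "Y *v x = x - (1/c) *\<^sub>R (M *v x)"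
      by (simp add: Y_def matrix_vector_mult_diff_rdistrib matrix_vector_scaleR_left)
    have e2: "cinner (M *v x) x = cinner x (M *v x)" by (simp add: herm_cinner[OF hM])
    have "(norm (Y *v x))\<^sup>2 = Re (cinner (Y *v x) (Y *v x))" by (simp add: Re_cinner_self)
    also have "\<dots> = (norm x)\<^sup>2 - 2 / c * q M x + (1/c)\<^sup>2 * (norm (M *v x))\<^sup>2"
      unfolding e1 using c0 by (simp add: cinner_diff_left cinner_diff_right cinner_scaleR_left cinner_scaleR_right
          e2 Re_cinner_self q_def qform_cinner power2_eq_square field_simps)
    also have "\<dots> \<le> (norm x)\<^sup>2"
    proof -
      have "(1/c)\<^sup>2 * (norm (M *v x))\<^sup>2 \<le> (1/c)\<^sup>2 * (L * q M x)"
        by (rule mult_left_mono[OF sq]) simp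
      also have "\<dots> = (L / c) * (q M x / c)" by (simp add: power2_eq_square field_simps)
      also have "\<dots> \<le> 1 * (q M x / c)"
      proof (rule mult_right_mono)
        show "L / c \<le> 1" using c0 by (simp add: c_def)
        show "0 \<le> q M x / c" using c0 q0 by simp
      qed
      also have "\<dots> \<le> 2 / c * q M x" using c0 q0 by (simp add: field_simps)
      finally show ?thesis by simp
    qed
    finally have "(norm (Y *v x))\<^sup>2 \<le> (norm x)\<^sup>2" .
    then have "norm (Y *v x) \<le> norm x" by (rule power2_le_imp_le) simp
    then show "norm (Y *v x) \<le> 1 * norm x" by simp
  qed
  obtain Wl where ml: "mlim (Wseq Y) Wl" and fx: "Wl = (1/2) *\<^sub>R (Y + Wl ** Wl)" and hW: "hermitian Wl"
    and qb: "\<And>x. q Wl x \<le> (norm x)\<^sup>2" and cm: "\<And>Q. Q ** Y = Y ** Q \<Longrightarrow> Q ** Wl = Wl ** Q"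
    using Wlim_props[OF pY oY] by blast
  define X0 where "X0 = mat 1 - Wl"
  define R where "R = sqrt c *\<^sub>R X0"
  have WW: "Wl ** Wl = 2 *\<^sub>R Wl - Y"
  proof -
    have "2 *\<^sub>R Wl = 2 *\<^sub>R ((1/2) *\<^sub>R (Y + Wl ** Wl))" using fx by (rule arg_cong)
    also have "\<dots> = Y + Wl ** Wl" by simp
    finally show ?thesis by (simp add: algebra_simps)
  qed
  have X0sq: "X0 ** X0 = (1/c) *\<^sub>R M"
  proof -
    have "X0 ** X0 = mat 1 - Wl - (Wl - Wl ** Wl)"
      by (simp add: X0_def mm_diff_l mm_diff_r)
    also have "\<dots> = mat 1 - Y" by (simp add: WW algebra_simps scaleR_2)
    also have "\<dots> = (1/c) *\<^sub>R M" by (simp add: Y_def)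
    finally show ?thesis .
  qed
  have pX0: "psd X0"
  proof (rule psdI)
    show "hermitian X0" using hW by (simp add: X0_def hermitian_def cadj_diff)
    fix x show "0 \<le> q X0 x" using qb[of x] by (simp add: X0_def q_diff_matrix q_mat1)
  qed
  have RR: "R ** R = M"
  proof -
    have "R ** R = (sqrt c * sqrt c) *\<^sub>R (X0 ** X0)" by (simp add: R_def mm_scale_l mm_scale_r)
    also have "\<dots> = M" using c0 by (simp add: X0sq)
    finally show ?thesis .
  qed
  have pR: "psd R" unfolding R_def by (rule psd_scaleR[OF pX0]) (simp add: less_imp_le[OF c0])
  show ?thesis
  proof (rule ex1I[of _ R])
    show "psd R \<and> R ** R = M" using pR RR by simp
  next
    fix Q assume Q: "psd Q \<and> Q ** Q = M"
    have "Q ** M = Q ** (Q ** Q)" using Q by simp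
    also have "\<dots> = (Q ** Q) ** Q" by (simp add: matrix_mul_assoc)
    also have "\<dots> = M ** Q" using Q by simp
    finally have QM: "Q ** M = M ** Q" .
    have "Q ** Y = Y ** Q" by (simp add: Y_def mm_diff_l mm_diff_r mm_scale_l mm_scale_r QM)
    then have "Q ** Wl = Wl ** Q" by (rule cm)
    then have "Q ** R = R ** Q" by (simp add: R_def X0_def mm_diff_l mm_diff_r mm_scale_l mm_scale_r)
    then show "Q = R" using sqrt_unique_comm[of Q R] Q pR RR by simp
  qed
qed

lemma psd_sqrt: assumes "psd M" shows "psd (psd_sqrt M)" "psd_sqrt M ** psd_sqrt M = M"
  using theI'[OF psd_sqrt_exists_unique[OF assms]] unfolding psd_sqrt_def by auto

lemma psd_sqrt_unique: "psd M \<Longrightarrow> psd X \<Longrightarrow> X ** X = M \<Longrightarrow> psd_sqrt M = X"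
  unfolding psd_sqrt_def by (rule the1_equality[OF psd_sqrt_exists_unique]) auto




lemma matrix_inv_props:
  fixes B :: "complex^'n^'n"
  assumes "invertible B"
  shows "B ** matrix_inv B = mat 1" "matrix_inv B ** B = mat 1"
proof -
  have "\<exists>A'. B ** A' = mat 1 \<and> A' ** B = mat 1" using assms by (simp add: invertible_def)
  then have "B ** matrix_inv B = mat 1 \<and> matrix_inv B ** B = mat 1"
    unfolding matrix_inv_def by (rule someI_ex)
  then show "B ** matrix_inv B = mat 1" "matrix_inv B ** B = mat 1" by auto
qed

lemma left_right_inv_eq:
  fixes L N R :: "complex^'n^'n"
  assumes "L ** N = mat 1" "N ** R = mat 1"
  shows "L = R"
proof -
  have "L = L ** (N ** R)" using assms(2) by simp
  also have "\<dots> = (L ** N) ** R" by (simp add: matrix_mul_assoc)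
  finally show ?thesis using assms(1) by simp
qed

lemma mv_inv: "(S::complex^'n^'n) ** Si = mat 1 \<Longrightarrow> S *v (Si *v v) = v"
  by (simp add: matrix_vector_mul_assoc)

lemma inv_herm:
  fixes S Si :: "complex^'n^'n"
  assumes h: "hermitian S" and r: "S ** Si = mat 1"
  shows "hermitian Si"
proof -
  have l: "cadj Si ** S = mat 1"
    using h r by (metis cadj_mat1 cadj_mult hermitian_def)
  have "cadj Si = Si" by (rule left_right_inv_eq[OF l r])
  then show ?thesis by (simp add: hermitian_def)
qed

lemma inv_psd:
  fixes S Si :: "complex^'n^'n"
  assumes p: "psd S" and r: "S ** Si = mat 1"
  shows "psd Si"
proof (rule psdI)
  show "hermitian Si" by (rule inv_herm[OF psd_herm[OF p] r])
  fix v
  have "cinner v (Si *v v) = cinner (S *v (Si *v v)) (Si *v v)" by (simp add: mv_inv[OF r])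
  also have "\<dots> = cinner (Si *v v) (S *v (Si *v v))" by (simp add: herm_cinner[OF psd_herm[OF p]])
  finally have "q Si v = q S (Si *v v)" by (simp add: q_def qform_cinner)
  then show "0 \<le> q Si v" using psd_q[OF p] by simp
qed

lemma q_inv_swap:
  fixes S Si :: "complex^'n^'n"
  assumes h: "hermitian S" and r: "S ** Si = mat 1"
  shows "q S (Si *v f) = q Si f"
proof -
  have "cinner (Si *v f) (S *v (Si *v f)) = cinner (Si *v f) f" by (simp add: mv_inv[OF r])
  also have "\<dots> = cnj (cinner f (Si *v f))" by (simp add: cnj_cinner)
  finally show ?thesis by (simp add: q_def qform_cinner)
qed

lemma cs_inv:
  fixes S Si :: "complex^'n^'n"
  assumes p: "psd S" and r: "S ** Si = mat 1"
  shows "Re (cinner x f) \<le> sqrt (q S x) * sqrt (q Si f)"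
proof -
  have "Re (cinner x f) = Re (cinner x (S *v (Si *v f)))" by (simp add: mv_inv[OF r])
  also have "\<dots> \<le> sqrt (q S x) * sqrt (q S (Si *v f))" by (rule psd_cs_Re[OF p])
  also have "q S (Si *v f) = q Si f" by (rule q_inv_swap[OF psd_herm[OF p] r])
  finally show ?thesis .
qed

lemma lemX:
  fixes C T Ti :: "complex^'n^'n"
  assumes pC: "psd C" and hT: "hermitian T" and r: "T ** Ti = mat 1" and pTi: "psd Ti"
    and g0: "0 \<le> g" and bnd: "\<And>y. q C y \<le> g * q T y"
  shows "q Ti (C *v y) \<le> g * q C y"
proof -
  define v where "v = Ti *v (C *v y)"
  define Q where "Q = q Ti (C *v y)"
  have Q0: "0 \<le> Q" using psd_q[OF pTi] by (simp add: Q_def)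
  have c0: "0 \<le> q C y" by (rule psd_q[OF pC])
  have "cinner y (C *v v) = cinner (C *v y) v" by (simp add: herm_cinner[OF psd_herm[OF pC]])
  then have e1: "Q = Re (cinner y (C *v v))" by (simp add: Q_def v_def q_def qform_cinner)
  have e2: "q T v = Q"
    unfolding v_def Q_def by (rule q_inv_swap[OF hT r])
  have "Q \<le> sqrt (q C y) * sqrt (q C v)" unfolding e1 by (rule psd_cs_Re[OF pC])
  also have "\<dots> \<le> sqrt (q C y) * sqrt (g * Q)"
    using bnd[of v] e2 c0 by (intro mult_left_mono) auto
  finally have "Q \<le> sqrt (q C y) * sqrt (g * Q)" .
  then have "Q\<^sup>2 \<le> (sqrt (q C y) * sqrt (g * Q))\<^sup>2" using Q0 by (rule power_mono)
  also have "\<dots> = q C y * (g * Q)" using c0 g0 Q0 by (simp add: power_mult_distrib)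
  finally have "Q * Q \<le> (g * q C y) * Q" by (simp add: power2_eq_square mult_ac)
  then show ?thesis
    using Q0 g0 c0 unfolding Q_def[symmetric]
    by (cases "Q = 0") (auto simp: mult_le_cancel_right)
qed

lemma sqrt_le_from_sq:
  fixes X F g :: real
  assumes "0 \<le> X" "0 \<le> g" "X\<^sup>2 \<le> g * (X * F)" "0 \<le> F"
  shows "X \<le> g * F"
proof (cases "X = 0")
  case True
  then show ?thesis using assms by simp
next
  case False
  then have "X > 0" using assms(1) by simp
  have "X * X \<le> (g * F) * X" using assms(3) by (simp add: power2_eq_square mult_ac)
  then show ?thesis using \<open>X > 0\<close> by simp
qed




lemma sqrt_sq_le:
  fixes u a X :: real
  assumes "0 \<le> a" "0 \<le> X" "u \<le> a * a * X\<^sup>2"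
  shows "sqrt u \<le> a * X"
proof -
  have "sqrt u \<le> sqrt ((a * X)\<^sup>2)" using assms(3) by (intro real_sqrt_le_mono) (simp add: power2_eq_square mult_ac)
  also have "\<dots> = a * X" using assms(1,2) by simp
  finally show ?thesis .
qed

locale setting =
  fixes A B C S T Si Ti :: "complex^'n^'n" and a g :: real
  assumes pA: "psd A" and pC: "psd C" and pS: "psd S" and pT: "psd T" and pSi: "psd Si" and pTi: "psd Ti"
    and rS: "S ** Si = mat 1" and rT: "T ** Ti = mat 1"
    and BTB: "B ** Ti ** cadj B = S" and BSB: "cadj B ** Si ** B = T"
    and a0: "0 \<le> a" and g0: "0 \<le> g" and bA: "\<And>x. q A x \<le> a * q S x" and bC: "\<And>y. q C y \<le> g * q T y"
begin

lemma K1: "q Ti (cadj B *v x) = q S x"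
proof -
  have "cinner (cadj B *v x) (Ti *v (cadj B *v x)) = cinner x (B *v (Ti *v (cadj B *v x)))"
    by (simp add: cinner_adj2)
  also have "\<dots> = cinner x (S *v x)" by (simp add: matrix_vector_mul_assoc matrix_mul_assoc BTB)
  finally show ?thesis by (simp add: q_def qform_cinner)
qed

lemma K2: "q Si (B *v y) = q T y"
proof -
  have "cinner (B *v y) (Si *v (B *v y)) = cinner y (cadj B *v (Si *v (B *v y)))"
    by (simp add: cinner_adj2)
  also have "\<dots> = cinner y (T *v y)" by (simp add: matrix_vector_mul_assoc matrix_mul_assoc BSB)
  finally show ?thesis by (simp add: q_def qform_cinner)
qed

lemma XA: "q Si (A *v x) \<le> a * q A x"
  by (rule lemX[OF pA psd_herm[OF pS] rS pSi a0 bA])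
lemma XC: "q Ti (C *v y) \<le> g * q C y"
  by (rule lemX[OF pC psd_herm[OF pT] rT pTi g0 bC])

lemma caseF:
  assumes e1: "A *v x + B *v y = f" and e2: "cadj B *v x - C *v y = 0"
  shows "sqrt (q S x) \<le> g * sqrt (q Si f)" "sqrt (q T y) \<le> (1 + a * g) * sqrt (q Si f)"
proof -
  define X where "X = sqrt (q S x)"
  define F where "F = sqrt (q Si f)"
  have X0: "0 \<le> X" and F0: "0 \<le> F" by (simp_all add: X_def F_def psd_q pS pSi)
  have qa0: "0 \<le> q A x" and qc0: "0 \<le> q C y" using psd_q pA pC by auto
  have By: "cadj B *v x = C *v y" using e2 by simp
  have "cinner x f = cinner x (A *v x) + cinner x (B *v y)" using e1 by (auto simp: cinner_add_right)
  also have "cinner x (B *v y) = cinner (C *v y) y" by (simp add: cinner_adj By)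
  also have "\<dots> = cinner y (C *v y)" by (simp add: herm_cinner[OF psd_herm[OF pC]])
  finally have E1: "Re (cinner x f) = q A x + q C y" by (simp add: q_def qform_cinner)
  have E2: "Re (cinner x f) \<le> X * F" unfolding X_def F_def by (rule cs_inv[OF pS rS])
  have XX: "X\<^sup>2 = q S x" using psd_q[OF pS] by (simp add: X_def)
  have E3: "X\<^sup>2 \<le> g * q C y"
    using XC[of y] K1[of x] By XX by simp
  have "X\<^sup>2 \<le> g * (X * F)"
  proof -
    have "g * q C y \<le> g * (q A x + q C y)" using g0 qa0 by (intro mult_left_mono) auto
    also have "\<dots> \<le> g * (X * F)" using E1 E2 g0 by (intro mult_left_mono) auto
    finally show ?thesis using E3 by simp
  qed
  then have XF: "X \<le> g * F" by (rule sqrt_le_from_sq[OF X0 g0 _ F0])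
  then show "sqrt (q S x) \<le> g * sqrt (q Si f)" by (simp add: X_def F_def)
  have By2: "B *v y = f + - (A *v x)" using e1 by (auto simp: algebra_simps)
  have "sqrt (q T y) = sqrt (q Si (f + - (A *v x)))" by (simp add: K2[symmetric] By2)
  also have "\<dots> \<le> F + sqrt (q Si (- (A *v x)))" unfolding F_def by (rule psd_triangle[OF pSi])
  also have "sqrt (q Si (- (A *v x))) \<le> a * X"
  proof -
    have "q Si (- (A *v x)) \<le> a * q A x" using XA by (simp add: q_minus_vec)
    also have "\<dots> \<le> a * (a * X\<^sup>2)" using bA[of x] XX a0 by (intro mult_left_mono) auto
    finally show ?thesis using a0 X0 by (intro sqrt_sq_le) (auto simp: mult_ac)
  qed
  also have "a * X \<le> a * (g * F)" using XF a0 by (rule mult_left_mono)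
  finally show "sqrt (q T y) \<le> (1 + a * g) * sqrt (q Si f)" by (simp add: F_def algebra_simps)
qed

lemma caseG:
  assumes e1: "A *v x + B *v y = 0" and e2: "cadj B *v x - C *v y = h"
  shows "sqrt (q T y) \<le> a * sqrt (q Ti h)" "sqrt (q S x) \<le> (1 + a * g) * sqrt (q Ti h)"
proof -
  define Y where "Y = sqrt (q T y)"
  define G where "G = sqrt (q Ti h)"
  have Y0: "0 \<le> Y" and G0: "0 \<le> G" by (simp_all add: Y_def G_def psd_q pT pTi)
  have qa0: "0 \<le> q A x" and qc0: "0 \<le> q C y" using psd_q pA pC by auto
  have By: "B *v y = - (A *v x)" using e1 by (simp add: eq_neg_iff_add_eq_0 add.commute)
  have "cinner y h = cinner y (cadj B *v x) - cinner y (C *v y)" using e2 by (auto simp: cinner_diff_right)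
  also have "cinner y (cadj B *v x) = cinner (B *v y) x" by (simp add: cinner_adj)
  also have "\<dots> = - cinner (A *v x) x" by (simp add: By cinner_minus_left)
  also have "cinner (A *v x) x = cinner x (A *v x)" by (simp add: herm_cinner[OF psd_herm[OF pA]])
  finally have "Re (cinner (- y) h) = q A x + q C y" by (simp add: q_def qform_cinner cinner_minus_left)
  moreover have "Re (cinner (- y) h) \<le> Y * G"
    using cs_inv[OF pT rT, of "- y" h] by (simp add: Y_def G_def q_minus_vec)
  ultimately have E1: "q A x + q C y \<le> Y * G" by simp
  have YY: "Y\<^sup>2 = q T y" using psd_q[OF pT] by (simp add: Y_def)
  have "Y\<^sup>2 \<le> a * (Y * G)"
  proof -
    have "Y\<^sup>2 = q Si (A *v x)" by (simp add: YY K2[symmetric] By q_minus_vec)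
    also have "\<dots> \<le> a * q A x" by (rule XA)
    also have "\<dots> \<le> a * (Y * G)" using E1 qc0 a0 by (intro mult_left_mono) auto
    finally show ?thesis .
  qed
  then have YG: "Y \<le> a * G" by (rule sqrt_le_from_sq[OF Y0 a0 _ G0])
  then show "sqrt (q T y) \<le> a * sqrt (q Ti h)" by (simp add: Y_def G_def)
  have Bx: "cadj B *v x = h + C *v y" using e2 by (auto simp: algebra_simps)
  have "sqrt (q S x) = sqrt (q Ti (h + C *v y))" by (simp add: K1[symmetric] Bx)
  also have "\<dots> \<le> G + sqrt (q Ti (C *v y))" unfolding G_def by (rule psd_triangle[OF pTi])
  also have "sqrt (q Ti (C *v y)) \<le> g * Y"
  proof -
    have "q Ti (C *v y) \<le> g * q C y" by (rule XC)
    also have "\<dots> \<le> g * (g * Y\<^sup>2)" using bC[of y] YY g0 by (intro mult_left_mono) auto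
    finally show ?thesis using g0 Y0 by (intro sqrt_sq_le) (auto simp: mult_ac)
  qed
  also have "g * Y \<le> g * (a * G)" using YG g0 by (rule mult_left_mono)
  finally show "sqrt (q S x) \<le> (1 + a * g) * sqrt (q Ti h)" by (simp add: G_def algebra_simps)
qed

end




lemma norm_sq_vec: "(norm (x::complex^'n))\<^sup>2 = (\<Sum>i\<in>UNIV. (norm (x $ i))\<^sup>2)"
  by (simp add: norm_vec_def L2_set_def sum_nonneg)

lemma sum_plus_univ:
  "(\<Sum>k\<in>(UNIV::('a::finite + 'b::finite) set). h k) = (\<Sum>i\<in>UNIV. h (Inl i)) + (\<Sum>i\<in>UNIV. h (Inr i))"
proof -
  have "sum h (UNIV <+> UNIV) = sum (h \<circ> Inl) (UNIV::'a set) + sum (h \<circ> Inr) (UNIV::'b set)"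
    by (rule sum.Plus) simp_all
  then show ?thesis by (simp add: o_def)
qed

definition vl :: "complex^('n+'n) \<Rightarrow> complex^'n" where "vl z = (\<chi> i. z $ Inl i)"
definition vr :: "complex^('n+'n) \<Rightarrow> complex^'n" where "vr z = (\<chi> i. z $ Inr i)"
definition joinv :: "complex^'n \<Rightarrow> complex^'n \<Rightarrow> complex^('n+'n)" where
  "joinv f g = (\<chi> k. case k of Inl i \<Rightarrow> f $ i | Inr i \<Rightarrow> g $ i)"

lemma vl_join[simp]: "vl (joinv f g) = f" by (simp add: vl_def joinv_def vec_eq_iff)
lemma vr_join[simp]: "vr (joinv f g) = g" by (simp add: vr_def joinv_def vec_eq_iff)
lemma join_split: "joinv f g = joinv f 0 + joinv 0 g"
  by (simp add: joinv_def vec_eq_iff split: sum.split)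
lemma join_vlvr: "joinv (vl z) (vr z) = z"
  by (simp add: joinv_def vl_def vr_def vec_eq_iff split: sum.split)
lemma vl_add: "vl (a + b) = vl a + vl b" by (simp add: vl_def vec_eq_iff)
lemma vr_add: "vr (a + b) = vr a + vr b" by (simp add: vr_def vec_eq_iff)

lemma norm_split: "(norm z)\<^sup>2 = (norm (vl z))\<^sup>2 + (norm (vr z))\<^sup>2"
  by (simp add: norm_sq_vec sum_plus_univ vl_def vr_def)

lemma H_vl: "vl (block_H A B C *v z) = A *v vl z + B *v vr z"
  by (simp add: vl_def vr_def block_H_def matrix_vector_mult_def vec_eq_iff sum_plus_univ)

lemma H_vr: "vr (block_H A B C *v z) = cadj B *v vl z - C *v vr z"
  by (simp add: vl_def vr_def block_H_def matrix_vector_mult_def vec_eq_iff sum_plus_univ sum_negf)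

lemma final_arith:
  fixes nx2 ny2 X Y F G nf nh al ga be k :: real
  assumes al0: "0 \<le> al" and ga0: "0 \<le> ga" and be0: "0 \<le> be" and k: "k = 1 + al * ga"
    and nf0: "0 \<le> nf" and nh0: "0 \<le> nh"
    and x2: "nx2 \<le> be * X\<^sup>2" and y2: "ny2 \<le> be * Y\<^sup>2"
    and X0: "0 \<le> X" and Xb: "X \<le> ga * F + k * G" and Y0: "0 \<le> Y" and Yb: "Y \<le> k * F + al * G"
    and F0: "0 \<le> F" and Fb: "F\<^sup>2 \<le> be * nf\<^sup>2" and G0: "0 \<le> G" and Gb: "G\<^sup>2 \<le> be * nh\<^sup>2"
  shows "nx2 + ny2 \<le> (be * (1 + max al ga + al * ga))\<^sup>2 * (nf\<^sup>2 + nh\<^sup>2)"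
proof -
  define m where "m = max al ga"
  define s where "s = sqrt be"
  have s0: "0 \<le> s" and ss: "s * s = be" using be0 by (simp_all add: s_def)
  have ss2: "s\<^sup>2 = be" using be0 by (simp add: s_def)
  have m0: "0 \<le> m" using al0 by (simp add: m_def)
  have k0: "0 \<le> k" using k al0 ga0 by simp
  have Fs: "F \<le> s * nf"
  proof -
    have "(s * nf)\<^sup>2 = be * nf\<^sup>2" unfolding ss[symmetric] by (simp add: power_mult_distrib power2_eq_square)
    then have "F\<^sup>2 \<le> (s * nf)\<^sup>2" using Fb by simp
    then show ?thesis by (rule power2_le_imp_le) (use s0 nf0 nh0 in auto)
  qed
  have Gs: "G \<le> s * nh"
  proof -
    have "(s * nh)\<^sup>2 = be * nh\<^sup>2" unfolding ss[symmetric] by (simp add: power_mult_distrib power2_eq_square)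
    then have "G\<^sup>2 \<le> (s * nh)\<^sup>2" using Gb by simp
    then show ?thesis by (rule power2_le_imp_le) (use s0 nf0 nh0 in auto)
  qed
  have "ga * F \<le> m * F" by (rule mult_right_mono) (simp_all add: m_def F0)
  then have "X \<le> m * F + k * G" using Xb by linarith
  also have "\<dots> \<le> m * (s * nf) + k * (s * nh)" using Fs Gs m0 k0 by (intro add_mono mult_left_mono) auto
  finally have Xs: "X \<le> s * (m * nf + k * nh)" by (simp add: algebra_simps)
  have "al * G \<le> m * G" by (rule mult_right_mono) (simp_all add: m_def G0)
  then have "Y \<le> k * F + m * G" using Yb by linarith
  also have "\<dots> \<le> k * (s * nf) + m * (s * nh)" using Fs Gs m0 k0 by (intro add_mono mult_left_mono) auto
  finally have Ys: "Y \<le> s * (k * nf + m * nh)" by (simp add: algebra_simps)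
  have "nx2 \<le> be * (s * (m * nf + k * nh))\<^sup>2"
  proof -
    have "X\<^sup>2 \<le> (s * (m * nf + k * nh))\<^sup>2" by (rule power_mono[OF Xs X0])
    then have "be * X\<^sup>2 \<le> be * (s * (m * nf + k * nh))\<^sup>2" by (rule mult_left_mono[OF _ be0])
    then show ?thesis using x2 by linarith
  qed
  also have "\<dots> = be\<^sup>2 * (m * nf + k * nh)\<^sup>2" by (simp add: power_mult_distrib ss2 power2_eq_square[of be])
  finally have x3: "nx2 \<le> be\<^sup>2 * (m * nf + k * nh)\<^sup>2" .
  have "ny2 \<le> be * (s * (k * nf + m * nh))\<^sup>2"
  proof -
    have "Y\<^sup>2 \<le> (s * (k * nf + m * nh))\<^sup>2" by (rule power_mono[OF Ys Y0])
    then have "be * Y\<^sup>2 \<le> be * (s * (k * nf + m * nh))\<^sup>2" by (rule mult_left_mono[OF _ be0])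
    then show ?thesis using y2 by linarith
  qed
  also have "\<dots> = be\<^sup>2 * (k * nf + m * nh)\<^sup>2" by (simp add: power_mult_distrib ss2 power2_eq_square[of be])
  finally have y3: "ny2 \<le> be\<^sup>2 * (k * nf + m * nh)\<^sup>2" .
  have key: "(m * nf + k * nh)\<^sup>2 + (k * nf + m * nh)\<^sup>2 \<le> (m + k)\<^sup>2 * (nf\<^sup>2 + nh\<^sup>2)"
  proof -
    have "0 \<le> 2 * (m * k) * (nf - nh)\<^sup>2" using m0 k0 by simp
    then show ?thesis by (simp add: power2_eq_square algebra_simps)
  qed
  have "nx2 + ny2 \<le> be\<^sup>2 * ((m * nf + k * nh)\<^sup>2 + (k * nf + m * nh)\<^sup>2)"
    using x3 y3 by (simp add: algebra_simps)
  also have "\<dots> \<le> be\<^sup>2 * ((m + k)\<^sup>2 * (nf\<^sup>2 + nh\<^sup>2))" using key by (intro mult_left_mono) auto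
  also have "\<dots> = (be * (m + k))\<^sup>2 * (nf\<^sup>2 + nh\<^sup>2)"
    by (simp add: power_mult_distrib)
  also have "m + k = 1 + max al ga + al * ga" by (simp add: m_def k)
  finally show ?thesis .
qed




lemma q_zero_vec[simp]: "q M 0 = 0" by (simp add: q_def qform_cinner)

lemma vl_zero[simp]: "vl 0 = 0" by (simp add: vl_def vec_eq_iff)
lemma vr_zero[simp]: "vr 0 = 0" by (simp add: vr_def vec_eq_iff)

lemma sup_ratio:
  fixes A P :: "complex^'n^'n"
  assumes pos: "\<And>x. x \<noteq> 0 \<Longrightarrow> 0 < q P x" and bd: "\<And>x. q A x \<le> K * q P x"
    and nn: "\<And>x. 0 \<le> q A x"
  shows "0 \<le> Sup {Re (qform A x) / Re (qform P x) | x. x \<noteq> 0}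
     \<and> (\<forall>x. q A x \<le> Sup {Re (qform A x) / Re (qform P x) | x. x \<noteq> 0} * q P x)"
proof -
  let ?R = "{Re (qform A x) / Re (qform P x) | x. x \<noteq> 0}"
  have bdd: "bdd_above ?R"
  proof (rule bdd_aboveI)
    fix r assume "r \<in> ?R"
    then obtain x where x: "x \<noteq> 0" "r = q A x / q P x" by (auto simp: q_def)
    then show "r \<le> K" using pos[OF x(1)] bd[of x] by (simp add: divide_le_eq)
  qed
  have le: "q A x / q P x \<le> Sup ?R" if "x \<noteq> 0" for x
    by (rule cSup_upper[OF _ bdd]) (use that in \<open>auto simp: q_def\<close>)
  define x0 :: "complex^'n" where "x0 = (\<chi> i. 1)"
  have x0: "x0 \<noteq> 0" by (simp add: x0_def vec_eq_iff)
  have "0 \<le> q A x0 / q P x0" using nn[of x0] pos[OF x0] by simp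
  then have s0: "0 \<le> Sup ?R" using le[OF x0] by linarith
  have "q A x \<le> Sup ?R * q P x" for x
  proof (cases "x = 0")
    case True then show ?thesis by simp
  next
    case False
    then show ?thesis using le[OF False] pos[OF False] by (simp add: divide_le_eq)
  qed
  then show ?thesis using s0 by blast
qed

lemma q_le_onorm:
  fixes A :: "complex^'n^'n"
  shows "q A x \<le> onorm (\<lambda>x. A *v x) * (norm x)\<^sup>2"
proof -
  have "q A x \<le> norm x * norm (A *v x)" unfolding q_def qform_cinner by (rule Re_cinner_le)
  also have "\<dots> \<le> norm x * (onorm (\<lambda>x. A *v x) * norm x)"
    by (rule mult_left_mono[OF onorm]) simp_all
  finally show ?thesis by (simp add: power2_eq_square mult_ac)
qed

theorem theorem3p3:
  fixes A B C :: "complex^'n^'n"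
  assumes "psd A" and "psd C" and "invertible B"
  defines "\<alpha> \<equiv> Sup {Re (qform A x) / Re (qform (psd_sqrt (B ** cadj B)) x) | x. x \<noteq> 0}"
      and "\<gamma> \<equiv> Sup {Re (qform C x) / Re (qform (psd_sqrt (cadj B ** B)) x) | x. x \<noteq> 0}"
  shows "invertible (block_H A B C)
     \<and> spec_norm (matrix_inv (block_H A B C))
         \<le> spec_norm (matrix_inv B) * (1 + max \<alpha> \<gamma> + \<alpha> * \<gamma>)"
proof -
  note pA = assms(1) and pC = assms(2)
  define Bi where "Bi = matrix_inv B"
  have BBi: "B ** Bi = mat 1" and BiB: "Bi ** B = mat 1"
    using matrix_inv_props[OF assms(3)] by (simp_all add: Bi_def)
  define be where "be = spec_norm Bi"
  have bBi: "norm (Bi *v v) \<le> be * norm v" for v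
    unfolding be_def spec_norm_def by (rule onorm) simp
  have be0: "0 \<le> be" unfolding be_def spec_norm_def by (rule onorm_pos_le) simp
  have cBBi: "cadj B ** cadj Bi = mat 1" using BiB by (metis cadj_mat1 cadj_mult)
  have cBiB: "cadj Bi ** cadj B = mat 1" using BBi by (metis cadj_mat1 cadj_mult)
  have bcBi: "norm (cadj Bi *v v) \<le> be * norm v" for v
  proof -
    define w where "w = cadj Bi *v v"
    have "(norm w)\<^sup>2 = Re (cinner w w)" by (simp add: Re_cinner_self)
    also have "cinner w w = cinner v (Bi *v w)" by (simp add: w_def cinner_adj2)
    also have "Re (cinner v (Bi *v w)) \<le> norm v * norm (Bi *v w)" by (rule Re_cinner_le)
    also have "\<dots> \<le> norm v * (be * norm w)" by (rule mult_left_mono[OF bBi]) simp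
    finally have "norm w * norm w \<le> (be * norm v) * norm w" by (simp add: power2_eq_square mult_ac)
    then show ?thesis unfolding w_def[symmetric]
      by (cases "norm w = 0") (use be0 in \<open>auto simp: mult_le_cancel_right\<close>)
  qed
  have pM1: "psd (B ** cadj B)"
  proof (rule psdI)
    show "hermitian (B ** cadj B)" by (simp add: hermitian_def cadj_mult)
    fix x
    have "cinner x ((B ** cadj B) *v x) = cinner (cadj B *v x) (cadj B *v x)"
      by (simp add: matrix_vector_mul_assoc[symmetric] cinner_adj)
    then show "0 \<le> q (B ** cadj B) x" by (simp add: q_def qform_cinner Re_cinner_self)
  qed
  have pM2: "psd (cadj B ** B)"
  proof (rule psdI)
    show "hermitian (cadj B ** B)" by (simp add: hermitian_def cadj_mult)
    fix x
    have "cinner x ((cadj B ** B) *v x) = cinner (B *v x) (B *v x)"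
      by (simp add: matrix_vector_mul_assoc[symmetric] cinner_adj)
    then show "0 \<le> q (cadj B ** B) x" by (simp add: q_def qform_cinner Re_cinner_self)
  qed
  define S where "S = psd_sqrt (B ** cadj B)"
  have pS: "psd S" and SS: "S ** S = B ** cadj B" using psd_sqrt[OF pM1] by (simp_all add: S_def)
  define Si where "Si = S ** cadj Bi ** Bi"
  have rS: "S ** Si = mat 1"
  proof -
    have "S ** Si = B ** (cadj B ** cadj Bi) ** Bi" by (simp add: Si_def matrix_mul_assoc SS)
    also have "\<dots> = mat 1" by (simp add: cBBi BBi)
    finally show ?thesis .
  qed
  have lS: "Si ** S = mat 1" using rS by (simp add: matrix_left_right_inverse)
  have pSi: "psd Si" by (rule inv_psd[OF pS rS])
  have hSi: "hermitian Si" by (rule psd_herm[OF pSi])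
  define T where "T = cadj B ** Si ** B"
  have pT: "psd T"
  proof (rule psdI)
    show "hermitian T" using hSi by (simp add: T_def hermitian_def cadj_mult matrix_mul_assoc)
    fix y
    have "cinner y (T *v y) = cinner (B *v y) (Si *v (B *v y))"
      by (simp add: T_def matrix_vector_mul_assoc[symmetric] cinner_adj)
    then have "q T y = q Si (B *v y)" by (simp add: q_def qform_cinner)
    then show "0 \<le> q T y" using psd_q[OF pSi] by simp
  qed
  have TT: "T ** T = cadj B ** B"
  proof -
    have "T ** T = cadj B ** (Si ** ((B ** cadj B) ** Si)) ** B" by (simp add: T_def matrix_mul_assoc)
    also have "Si ** ((B ** cadj B) ** Si) = (Si ** S) ** (S ** Si)"
      by (simp add: SS[symmetric] matrix_mul_assoc)
    finally show ?thesis by (simp add: lS rS)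
  qed
  have Tsq: "psd_sqrt (cadj B ** B) = T" by (rule psd_sqrt_unique[OF pM2 pT TT])
  define Ti where "Ti = Bi ** S ** cadj Bi"
  have rT: "T ** Ti = mat 1"
  proof -
    have "T ** Ti = cadj B ** (Si ** ((B ** Bi) ** S)) ** cadj Bi" by (simp add: T_def Ti_def matrix_mul_assoc)
    also have "\<dots> = mat 1" by (simp add: BBi lS cBBi)
    finally show ?thesis .
  qed
  have lT: "Ti ** T = mat 1" using rT by (simp add: matrix_left_right_inverse)
  have pTi: "psd Ti"
  proof (rule psdI)
    show "hermitian Ti" using psd_herm[OF pS] by (simp add: Ti_def hermitian_def cadj_mult matrix_mul_assoc)
    fix v
    have "cinner v (Ti *v v) = cinner (cadj Bi *v v) (S *v (cadj Bi *v v))"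
      by (simp add: Ti_def matrix_vector_mul_assoc[symmetric] cinner_adj)
    then have "q Ti v = q S (cadj Bi *v v)" by (simp add: q_def qform_cinner)
    then show "0 \<le> q Ti v" using psd_q[OF pS] by simp
  qed
  have BTB: "B ** Ti ** cadj B = S"
  proof -
    have "B ** Ti ** cadj B = (B ** Bi) ** S ** (cadj Bi ** cadj B)" by (simp add: Ti_def matrix_mul_assoc)
    then show ?thesis by (simp add: BBi cBiB)
  qed
  have BSB: "cadj B ** Si ** B = T" by (simp add: T_def)
  have SiSi: "Si ** Si = cadj Bi ** Bi"
  proof (rule left_right_inv_eq[of _ "B ** cadj B"])
    show "Si ** Si ** (B ** cadj B) = mat 1"
      by (simp add: SS[symmetric] matrix_mul_assoc) (simp add: matrix_mul_assoc[symmetric] lS)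
    show "B ** cadj B ** (cadj Bi ** Bi) = mat 1"
      by (simp add: matrix_mul_assoc) (simp add: matrix_mul_assoc[symmetric] cBBi BBi)
  qed
  have TiTi: "Ti ** Ti = Bi ** cadj Bi"
  proof (rule left_right_inv_eq[of _ "cadj B ** B"])
    show "Ti ** Ti ** (cadj B ** B) = mat 1"
      by (simp add: TT[symmetric] matrix_mul_assoc) (simp add: matrix_mul_assoc[symmetric] lT)
    show "cadj B ** B ** (Bi ** cadj Bi) = mat 1"
      by (simp add: matrix_mul_assoc) (simp add: matrix_mul_assoc[symmetric] BBi cBBi)
  qed
  have bSi: "norm (Si *v u) \<le> be * norm u" for u
  proof -
    have "(norm (Si *v u))\<^sup>2 = Re (cinner (Si *v u) (Si *v u))" by (simp add: Re_cinner_self)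
    also have "cinner (Si *v u) (Si *v u) = cinner u ((Si ** Si) *v u)"
      by (simp add: herm_cinner[OF hSi, of u "Si *v u", symmetric] matrix_vector_mul_assoc)
    also have "\<dots> = cinner (Bi *v u) (Bi *v u)"
      by (simp add: SiSi matrix_vector_mul_assoc[symmetric] cinner_adj)
    also have "Re \<dots> = (norm (Bi *v u))\<^sup>2" by (simp add: Re_cinner_self)
    also have "\<dots> \<le> (be * norm u)\<^sup>2" by (rule power_mono[OF bBi]) simp
    finally show ?thesis by (rule power2_le_imp_le) (use be0 in simp)
  qed
  have bTi: "norm (Ti *v u) \<le> be * norm u" for u
  proof -
    have hTi: "hermitian Ti" by (rule psd_herm[OF pTi])
    have "(norm (Ti *v u))\<^sup>2 = Re (cinner (Ti *v u) (Ti *v u))" by (simp add: Re_cinner_self)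
    also have "cinner (Ti *v u) (Ti *v u) = cinner u ((Ti ** Ti) *v u)"
      by (simp add: herm_cinner[OF hTi, of u "Ti *v u", symmetric] matrix_vector_mul_assoc)
    also have "\<dots> = cinner (cadj Bi *v u) (cadj Bi *v u)"
      by (simp add: TiTi matrix_vector_mul_assoc[symmetric] cinner_adj)
    also have "Re \<dots> = (norm (cadj Bi *v u))\<^sup>2" by (simp add: Re_cinner_self)
    also have "\<dots> \<le> (be * norm u)\<^sup>2" by (rule power_mono[OF bcBi]) simp
    finally show ?thesis by (rule power2_le_imp_le) (use be0 in simp)
  qed
  have K3: "(norm x)\<^sup>2 \<le> be * q S x" for x
  proof -
    have "(norm (Si *v (S *v x)))\<^sup>2 \<le> be * q Si (S *v x)" by (rule psd_sq_bound[OF pSi bSi])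
    moreover have "Si *v (S *v x) = x" by (rule mv_inv[OF lS])
    moreover have "q Si (S *v x) = q S x" by (rule q_inv_swap[OF hSi lS])
    ultimately show ?thesis by simp
  qed
  have K4: "(norm y)\<^sup>2 \<le> be * q T y" for y
  proof -
    have "(norm (Ti *v (T *v y)))\<^sup>2 \<le> be * q Ti (T *v y)" by (rule psd_sq_bound[OF pTi bTi])
    moreover have "Ti *v (T *v y) = y" by (rule mv_inv[OF lT])
    moreover have "q Ti (T *v y) = q T y" by (rule q_inv_swap[OF psd_herm[OF pTi] lT])
    ultimately show ?thesis by simp
  qed
  have K5: "q Si f \<le> be * (norm f)\<^sup>2" for f
  proof -
    have "q Si f \<le> norm f * norm (Si *v f)" unfolding q_def qform_cinner by (rule Re_cinner_le)
    also have "\<dots> \<le> norm f * (be * norm f)" by (rule mult_left_mono[OF bSi]) simp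
    finally show ?thesis by (simp add: power2_eq_square mult_ac)
  qed
  have K6: "q Ti h \<le> be * (norm h)\<^sup>2" for h
  proof -
    have "q Ti h \<le> norm h * norm (Ti *v h)" unfolding q_def qform_cinner by (rule Re_cinner_le)
    also have "\<dots> \<le> norm h * (be * norm h)" by (rule mult_left_mono[OF bTi]) simp
    finally show ?thesis by (simp add: power2_eq_square mult_ac)
  qed
  have posS: "0 < q S x" if "x \<noteq> 0" for x
  proof (rule ccontr)
    assume "\<not> 0 < q S x"
    then have "be * q S x \<le> 0" using be0 by (simp add: mult_nonneg_nonpos)
    moreover have "0 < (norm x)\<^sup>2" using that by simp
    ultimately show False using K3[of x] by linarith
  qed
  have posT: "0 < q T x" if "x \<noteq> 0" for x
  proof (rule ccontr)
    assume "\<not> 0 < q T x"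
    then have "be * q T x \<le> 0" using be0 by (simp add: mult_nonneg_nonpos)
    moreover have "0 < (norm x)\<^sup>2" using that by simp
    ultimately show False using K4[of x] by linarith
  qed
  have bdA: "q A x \<le> (onorm (\<lambda>x. A *v x) * be) * q S x" for x
  proof -
    have "q A x \<le> onorm (\<lambda>x. A *v x) * (norm x)\<^sup>2" by (rule q_le_onorm)
    also have "\<dots> \<le> onorm (\<lambda>x. A *v x) * (be * q S x)" by (rule mult_left_mono[OF K3]) (simp add: onorm_pos_le)
    finally show ?thesis by (simp add: mult_ac)
  qed
  have bdC: "q C x \<le> (onorm (\<lambda>x. C *v x) * be) * q T x" for x
  proof -
    have "q C x \<le> onorm (\<lambda>x. C *v x) * (norm x)\<^sup>2" by (rule q_le_onorm)
    also have "\<dots> \<le> onorm (\<lambda>x. C *v x) * (be * q T x)" by (rule mult_left_mono[OF K4]) (simp add: onorm_pos_le)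
    finally show ?thesis by (simp add: mult_ac)
  qed
  have al: "0 \<le> \<alpha> \<and> (\<forall>x. q A x \<le> \<alpha> * q S x)"
    unfolding \<alpha>_def S_def[symmetric] by (rule sup_ratio[OF posS bdA psd_q[OF pA]])
  have ga: "0 \<le> \<gamma> \<and> (\<forall>x. q C x \<le> \<gamma> * q T x)"
    unfolding \<gamma>_def Tsq by (rule sup_ratio[OF posT bdC psd_q[OF pC]])
  interpret st: setting A B C S T Si Ti \<alpha> \<gamma>
    using pA pC pS pT pSi pTi rS rT BTB BSB al ga by unfold_locales auto
  let ?H = "block_H A B C"
  have ker: "z = 0" if "?H *v z = 0" for z
  proof -
    have e1: "A *v vl z + B *v vr z = 0" using H_vl[of A B C z] that by simp
    have e2: "cadj B *v vl z - C *v vr z = 0" using H_vr[of A B C z] that by simp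
    have "sqrt (q S (vl z)) \<le> \<gamma> * sqrt (q Si 0)" by (rule st.caseF(1)[OF e1 e2])
    then have "q S (vl z) \<le> 0" by simp
    then have "(norm (vl z))\<^sup>2 \<le> 0" using K3[of "vl z"] be0 by (smt (verit) mult_nonneg_nonpos)
    then have x0: "vl z = 0" by simp
    have "sqrt (q T (vr z)) \<le> (1 + \<alpha> * \<gamma>) * sqrt (q Si 0)" by (rule st.caseF(2)[OF e1 e2])
    then have "q T (vr z) \<le> 0" by simp
    then have "(norm (vr z))\<^sup>2 \<le> 0" using K4[of "vr z"] be0 by (smt (verit) mult_nonneg_nonpos)
    then have y0: "vr z = 0" by simp
    show ?thesis unfolding vec_eq_iff
    proof
      fix i show "z $ i = 0 $ i"
      proof (cases i)
        case (Inl a) then show ?thesis using x0 by (simp add: vl_def vec_eq_iff)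
      next
        case (Inr a) then show ?thesis using y0 by (simp add: vr_def vec_eq_iff)
      qed
    qed
  qed
  have invH: "invertible ?H"
    using ker by (simp add: invertible_left_inverse matrix_left_invertible_ker)
  define Hi where "Hi = matrix_inv ?H"
  have HHi: "?H ** Hi = mat 1" using matrix_inv_props[OF invH] by (simp add: Hi_def)
  have main: "norm (Hi *v w) \<le> (be * (1 + max \<alpha> \<gamma> + \<alpha> * \<gamma>)) * norm w" for w
  proof -
    define f where "f = vl w"
    define h where "h = vr w"
    define z1 where "z1 = Hi *v joinv f 0"
    define z2 where "z2 = Hi *v joinv 0 h"
    have Hz1: "?H *v z1 = joinv f 0" by (simp add: z1_def mv_inv[OF HHi])
    have Hz2: "?H *v z2 = joinv 0 h" by (simp add: z2_def mv_inv[OF HHi])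
    have wsplit: "w = joinv f 0 + joinv 0 h"
      using join_split[of f h] join_vlvr[of w] by (simp add: f_def h_def)
    have z: "Hi *v w = z1 + z2" by (simp add: wsplit z1_def z2_def matrix_vector_right_distrib)
    have f1: "A *v vl z1 + B *v vr z1 = f" using H_vl[of A B C z1] Hz1 by simp
    have f2: "cadj B *v vl z1 - C *v vr z1 = 0" using H_vr[of A B C z1] Hz1 by simp
    have g1: "A *v vl z2 + B *v vr z2 = 0" using H_vl[of A B C z2] Hz2 by simp
    have g2: "cadj B *v vl z2 - C *v vr z2 = h" using H_vr[of A B C z2] Hz2 by simp
    define x where "x = vl (Hi *v w)"
    define y where "y = vr (Hi *v w)"
    have xs: "x = vl z1 + vl z2" by (simp add: x_def z vl_add)
    have ys: "y = vr z1 + vr z2" by (simp add: y_def z vr_add)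
    define F where "F = sqrt (q Si f)"
    define G where "G = sqrt (q Ti h)"
    have "sqrt (q S x) \<le> sqrt (q S (vl z1)) + sqrt (q S (vl z2))" unfolding xs by (rule psd_triangle[OF pS])
    also have "\<dots> \<le> \<gamma> * F + (1 + \<alpha> * \<gamma>) * G"
      using st.caseF(1)[OF f1 f2] st.caseG(2)[OF g1 g2] by (simp add: F_def G_def)
    finally have Xb: "sqrt (q S x) \<le> \<gamma> * F + (1 + \<alpha> * \<gamma>) * G" .
    have "sqrt (q T y) \<le> sqrt (q T (vr z1)) + sqrt (q T (vr z2))" unfolding ys by (rule psd_triangle[OF pT])
    also have "\<dots> \<le> (1 + \<alpha> * \<gamma>) * F + \<alpha> * G"
      using st.caseF(2)[OF f1 f2] st.caseG(1)[OF g1 g2] by (simp add: F_def G_def)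
    finally have Yb: "sqrt (q T y) \<le> (1 + \<alpha> * \<gamma>) * F + \<alpha> * G" .
    have x2: "(norm x)\<^sup>2 \<le> be * (sqrt (q S x))\<^sup>2" using K3[of x] psd_q[OF pS, of x] by simp
    have y2: "(norm y)\<^sup>2 \<le> be * (sqrt (q T y))\<^sup>2" using K4[of y] psd_q[OF pT, of y] by simp
    have Fb: "F\<^sup>2 \<le> be * (norm f)\<^sup>2" using K5[of f] psd_q[OF pSi, of f] by (simp add: F_def)
    have Gb: "G\<^sup>2 \<le> be * (norm h)\<^sup>2" using K6[of h] psd_q[OF pTi, of h] by (simp add: G_def)
    have "(norm x)\<^sup>2 + (norm y)\<^sup>2 \<le> (be * (1 + max \<alpha> \<gamma> + \<alpha> * \<gamma>))\<^sup>2 * ((norm f)\<^sup>2 + (norm h)\<^sup>2)"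
      by (rule final_arith[OF _ _ be0 refl _ _ x2 y2 _ Xb _ Yb _ Fb _ Gb]) (use al ga psd_q[OF pS] psd_q[OF pT] psd_q[OF pSi] psd_q[OF pTi] in \<open>auto simp: F_def G_def\<close>)
    then have "(norm (Hi *v w))\<^sup>2 \<le> ((be * (1 + max \<alpha> \<gamma> + \<alpha> * \<gamma>)) * norm w)\<^sup>2"
      by (simp add: norm_split[of "Hi *v w"] norm_split[of w] x_def y_def f_def h_def power_mult_distrib)
    then show ?thesis
      by (rule power2_le_imp_le) (use be0 al ga in \<open>auto intro!: mult_nonneg_nonneg\<close>)
  qed
  have "spec_norm Hi \<le> be * (1 + max \<alpha> \<gamma> + \<alpha> * \<gamma>)"
    unfolding spec_norm_def by (rule onorm_le) (rule main)
  then show ?thesis using invH by (simp add: Hi_def be_def Bi_def)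
qed



end
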